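(* Let $q,w$ be real-valued functions with $q,w\in L^1[-1,1]$, $w(x)\neq0$ for a.e. $x\in[-1,1]$, $w$ changing sign on $[-1,1]$, and assume moreover $w$ is absolutely continuous on $[-1,1]$ with $w'\in L^2[-1,1]$. Let $\varepsilon_2>0$ be such that $8\|q_-\|_1^2\, m_2(\varepsilon_2)<1$. If $\lambda\in\mathbb{C}\setminus\mathbb{R}$ is an eigenvalue of the problem $-y''+qy=\lambda wy$, $y(-1)=y(1)=0$, then $$|\operatorname{Re}\lambda|\le \frac{8}{\varepsilon_2}\|q_-\|_1^2\big(3\|w\|_C+\|w'\|_2\big),\qquad |\operatorname{Im}\lambda|\le \frac{8}{\varepsilon_2}\|w'\|_2\|q_-\|_1^2 .$$
   Context: $\|\cdot\|_p$ denotes the norm of $L^p[-1,1]$ (Lebesgue measure) and $\|\cdot\|_C$ the maximum norm on $C[-1,1]$. $q_-(x)=-\min\{0,q(x)\}$. For $\varepsilon>0$, $S_2(\varepsilon)=\{x\in[-1,1]: w(x)^2<\varepsilon\}$ and $m_2(\varepsilon)$ is the Lebesgue measure of $S_2(\varepsilon)$. A number $\lambda\in\mathbb{C}$ is an eigenvalue of $-y''+qy=\lambda wy$, $y(-1)=y(1)=0$, if there is a nontrivial function $y$ with $y,y'$ absolutely continuous on $[-1,1]$ satisfying $-y''+qy=\lambda wy$ a.e. on $[-1,1]$ and $y(-1)=y(1)=0$. *)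

theory Defs
  imports "HOL-Analysis.Analysis"
begin

definition abs_continuous_on :: "real \<Rightarrow> real \<Rightarrow> (real \<Rightarrow> 'b::real_normed_vector) \<Rightarrow> bool" where
  "abs_continuous_on c d f \<longleftrightarrow>
     (\<forall>\<epsilon>>0. \<exists>\<delta>>0. \<forall>(n::nat) (a::nat \<Rightarrow> real) (b::nat \<Rightarrow> real).
        (\<forall>i<n. c \<le> a i \<and> a i \<le> b i \<and> b i \<le> d) \<and>
        (\<forall>i<n. \<forall>j<n. i \<noteq> j \<longrightarrow> b i \<le> a j \<or> b j \<le> a i) \<and>
        (\<Sum>i<n. b i - a i) < \<delta>
        \<longrightarrow> (\<Sum>i<n. norm (f (b i) - f (a i))) < \<epsilon>)"

text \<open>\<lambda> is an eigenvalue of  -y'' + q y = \<lambda> w y,  y(-1) = y(1) = 0.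
  Here y1 is y' (the derivative of y on [-1,1]); y'' is the a.e. derivative of y'.\<close>
definition is_eigenvalue :: "(real \<Rightarrow> real) \<Rightarrow> (real \<Rightarrow> real) \<Rightarrow> complex \<Rightarrow> bool" where
  "is_eigenvalue q w lam \<longleftrightarrow>
     (\<exists>y y1 :: real \<Rightarrow> complex.
        (\<exists>x\<in>{-1..1}. y x \<noteq> 0) \<and>
        abs_continuous_on (-1) 1 y \<and> abs_continuous_on (-1) 1 y1 \<and>
        (\<forall>x\<in>{-1..1}. (y has_vector_derivative y1 x) (at x within {-1..1})) \<and>
        (AE x in lebesgue. x \<in> {-1..1} \<longrightarrow>
           (\<exists>d. (y1 has_vector_derivative d) (at x) \<and>
                - d + complex_of_real (q x) * y x = lam * complex_of_real (w x) * y x)) \<and>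
        y (-1) = 0 \<and> y 1 = 0)"

end

theory Submission
  imports Defs
begin


lemma intervals_sep:
  fixes u v u' v' :: real
  assumes "u < v" "u' < v'" "{u<..<v} \<inter> {u'<..<v'} = {}"
  shows "v \<le> u' \<or> v' \<le> u"
proof (rule ccontr)
  assume "\<not> ?thesis"
  then have "(max u u' + min v v') / 2 \<in> {u<..<v} \<inter> {u'<..<v'}"
    using assms by (auto simp: max_def min_def split: if_splits)
  then show False using assms by blast
qed

lemma has_integral_realE:
  fixes f :: "real \<Rightarrow> 'a::real_normed_vector"
  assumes "(f has_integral y) {a..b}" "e>0"
  obtains \<gamma> where "gauge \<gamma>" "\<And>p. p tagged_division_of {a..b} \<Longrightarrow> \<gamma> fine p \<Longrightarrow>
     norm (sum (\<lambda>(x,k). Henstock_Kurzweil_Integration.content k *\<^sub>R f x) p - y) < e"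
proof -
  from assms(1)[unfolded has_integral_real, rule_format, OF assms(2)]
  obtain \<gamma> where "gauge \<gamma>" and "\<forall>\<D>. \<D> tagged_division_of {a..b} \<and> \<gamma> fine \<D> \<longrightarrow>
        norm (sum (\<lambda>(x,k). Henstock_Kurzweil_Integration.content(k) *\<^sub>R f x) \<D> - y) < e"
    by (elim exE conjE)
  then show ?thesis using that by simp
qed

lemma ac_ftc:
  fixes f f' :: "real \<Rightarrow> 'a::banach"
  assumes ab: "a \<le> b" and ac: "abs_continuous_on a b f" and E: "negligible E"
    and der: "\<And>x. x \<in> {a..b} \<Longrightarrow> x \<notin> E \<Longrightarrow> (f has_vector_derivative f' x) (at x within {a..b})"
  shows "(f' has_integral (f b - f a)) {a..b}"
  unfolding has_integral_real
proof (intro allI impI)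
  fix e :: real assume e: "e > 0"
  define e1 where "e1 = e / (4 * (b - a + 1))"
  have e1: "e1 > 0" using e ab by (simp add: e1_def)
  have "\<forall>x. \<exists>d>0. x \<in> {a..b} \<and> x \<notin> E \<longrightarrow>
         (\<forall>y\<in>{a..b}. norm (y-x) < d \<longrightarrow> norm (f y - f x - (y-x) *\<^sub>R f' x) \<le> e1 * norm (y-x))"
  proof
    fix x
    show "\<exists>d>0. x \<in> {a..b} \<and> x \<notin> E \<longrightarrow>
         (\<forall>y\<in>{a..b}. norm (y-x) < d \<longrightarrow> norm (f y - f x - (y-x) *\<^sub>R f' x) \<le> e1 * norm (y-x))"
    proof (cases "x \<in> {a..b} \<and> x \<notin> E")
      case True
      then show ?thesis
        using der[of x] e1 unfolding has_vector_derivative_def has_derivative_within_alt by blast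
    qed (auto intro: exI[of _ 1])
  qed
  then obtain d where d0: "\<forall>x. 0 < d x \<and> (x \<in> {a..b} \<and> x \<notin> E \<longrightarrow>
         (\<forall>y\<in>{a..b}. norm (y-x) < d x \<longrightarrow> norm (f y - f x - (y-x) *\<^sub>R f' x) \<le> e1 * norm (y-x)))"
    by (auto simp: choice_iff)
  have d: "\<And>x. 0 < d x"
     "\<And>x y. \<lbrakk>x \<in> {a..b}; x \<notin> E; y \<in> {a..b}; norm (y-x) < d x\<rbrakk>
                        \<Longrightarrow> norm (f y - f x - (y-x) *\<^sub>R f' x) \<le> e1 * norm (y-x)"
    using d0 by blast+
  have e4: "e/4 > 0" using e by simp
  have "\<exists>\<delta>>0. \<forall>(n::nat) (aa::nat \<Rightarrow> real) (bb::nat \<Rightarrow> real).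
        (\<forall>i<n. a \<le> aa i \<and> aa i \<le> bb i \<and> bb i \<le> b) \<and>
        (\<forall>i<n. \<forall>j<n. i \<noteq> j \<longrightarrow> bb i \<le> aa j \<or> bb j \<le> aa i) \<and>
        (\<Sum>i<n. bb i - aa i) < \<delta>
        \<longrightarrow> (\<Sum>i<n. norm (f (bb i) - f (aa i))) < e/4"
    using ac[unfolded abs_continuous_on_def, rule_format, OF e4] .
  then obtain \<delta> where \<delta>: "\<delta> > 0" and \<delta>P0: "\<forall>(n::nat) (aa::nat \<Rightarrow> real) (bb::nat \<Rightarrow> real).
        (\<forall>i<n. a \<le> aa i \<and> aa i \<le> bb i \<and> bb i \<le> b) \<and>
        (\<forall>i<n. \<forall>j<n. i \<noteq> j \<longrightarrow> bb i \<le> aa j \<or> bb j \<le> aa i) \<and>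
        (\<Sum>i<n. bb i - aa i) < \<delta>
        \<longrightarrow> (\<Sum>i<n. norm (f (bb i) - f (aa i))) < e/4"
    by blast
  have \<delta>P: "\<And>n (aa::nat\<Rightarrow>real) bb.
        (\<forall>i<n. a \<le> aa i \<and> aa i \<le> bb i \<and> bb i \<le> b) \<Longrightarrow>
        (\<forall>i<n. \<forall>j<n. i \<noteq> j \<longrightarrow> bb i \<le> aa j \<or> bb j \<le> aa i) \<Longrightarrow>
        (\<Sum>i<n. bb i - aa i) < \<delta> \<Longrightarrow> (\<Sum>i<n. norm (f (bb i) - f (aa i))) < e/4"
    using \<delta>P0 by blast
  have i1: "((indicator E :: real \<Rightarrow> real) has_integral 0) {a..b}"
    by (rule has_integral_negligible[OF E]) auto
  obtain g2 where g2: "gauge g2" and g2P: "\<And>p. p tagged_division_of {a..b} \<Longrightarrow> g2 fine p \<Longrightarrow>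
       norm ((\<Sum>(x,k)\<in>p. Henstock_Kurzweil_Integration.content k *\<^sub>R indicat_real E x) - 0) < \<delta>"
    using has_integral_realE[OF i1 \<delta>] by metis
  define I2 where "I2 = (\<lambda>x. if x \<in> E then norm (f' x) else (0::real))"
  have i2: "(I2 has_integral (0::real)) {a..b}"
    unfolding I2_def by (rule has_integral_negligible[OF E]) auto
  obtain g3 where g3: "gauge g3" and g3P: "\<And>p. p tagged_division_of {a..b} \<Longrightarrow> g3 fine p \<Longrightarrow>
       norm ((\<Sum>(x,k)\<in>p. Henstock_Kurzweil_Integration.content k *\<^sub>R I2 x) - 0) < e/4"
    using has_integral_realE[OF i2 e4] by metis
  show "\<exists>\<gamma>. gauge \<gamma> \<and> (\<forall>\<D>. \<D> tagged_division_of {a..b} \<and> \<gamma> fine \<D> \<longrightarrow>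
             norm ((\<Sum>(x, k)\<in>\<D>. Henstock_Kurzweil_Integration.content k *\<^sub>R f' x) - (f b - f a)) < e)"
  proof (intro exI conjI allI impI)
    show "gauge (\<lambda>x. ball x (d x) \<inter> g2 x \<inter> g3 x)"
      using d(1) g2 g3 by (intro gauge_Int gauge_ball_dependent) auto
    fix p assume "p tagged_division_of {a..b} \<and> (\<lambda>x. ball x (d x) \<inter> g2 x \<inter> g3 x) fine p"
    then have ptag: "p tagged_division_of {a..b}" and fb: "(\<lambda>x. ball x (d x)) fine p"
      and f2: "g2 fine p" and f3: "g3 fine p"
      by (auto simp: fine_Int)
    have finp: "finite p" using ptag by blast
    have K: "\<And>x K. (x,K) \<in> p \<Longrightarrow> x \<in> K \<and> K \<subseteq> {a..b} \<and> (\<exists>u v. K = {u..v} \<and> u \<le> v)"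
    proof -
      fix x K assume "(x,K) \<in> p"
      then have "x \<in> K" "K \<subseteq> {a..b}" "\<exists>u v. K = cbox u v" using ptag by blast+
      then show "x \<in> K \<and> K \<subseteq> {a..b} \<and> (\<exists>u v. K = {u..v} \<and> u \<le> v)" by auto
    qed
    define T where "T = (\<lambda>(x::real,K::real set). Henstock_Kurzweil_Integration.content K *\<^sub>R f' x - (f (Sup K) - f (Inf K)))"
    have ba: "f b - f a = (\<Sum>(x,K)\<in>p. f(Sup K) - f(Inf K))"
      using additive_tagged_division_1[where f= f] ab ptag by auto
    have eqT: "(\<Sum>(x, k)\<in>p. Henstock_Kurzweil_Integration.content k *\<^sub>R f' x) - (f b - f a) = (\<Sum>xk\<in>p. T xk)"
      by (simp add: ba T_def split_def sum_subtractf)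
    define p1 where "p1 = {xk\<in>p. fst xk \<notin> E}"
    define p2 where "p2 = {xk\<in>p. fst xk \<in> E}"
    define p3 where "p3 = {xk\<in>p2. Henstock_Kurzweil_Integration.content (snd xk) \<noteq> 0}"
    have pu: "p = p1 \<union> p2" "p1 \<inter> p2 = {}" by (auto simp: p1_def p2_def)
    have fin12: "finite p1" "finite p2" "finite p3" using finp by (auto simp: p1_def p2_def p3_def)
    have sumsplit: "(\<Sum>xk\<in>p. T xk) = (\<Sum>xk\<in>p1. T xk) + (\<Sum>xk\<in>p2. T xk)"
      using pu fin12 by (simp add: sum.union_disjoint)
    have cont_sum: "(\<Sum>(x,K)\<in>p. Henstock_Kurzweil_Integration.content K) = b - a"
      using additive_content_tagged_division[of p a b] ptag ab by simp
    have bound1: "norm (\<Sum>xk\<in>p1. T xk) \<le> e1 * (b - a)"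
    proof -
      have "norm (\<Sum>xk\<in>p1. T xk) \<le> (\<Sum>xk\<in>p1. e1 * Henstock_Kurzweil_Integration.content (snd xk))"
      proof (rule sum_norm_le)
        fix xk assume xk: "xk \<in> p1"
        obtain x K where xkd: "xk = (x,K)" by (cases xk)
        have inp: "(x,K) \<in> p" and xE: "x \<notin> E" using xk by (auto simp: p1_def xkd)
        obtain u v where k: "K = {u..v}" and uv: "u \<le> v" and xK: "x \<in> K" and kab: "K \<subseteq> {a..b}"
          using K[OF inp] by blast
        have ball: "\<forall>y\<in>K. y \<in> ball x (d x)"
          using fb inp by blast
        have "u \<in> K" "v \<in> K" using uv k by auto
        have "norm ((v - u) *\<^sub>R f' x - (f v - f u)) = norm (f u - f x - (u - x) *\<^sub>R f' x - (f v - f x - (v - x) *\<^sub>R f' x))"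
          by (auto simp: algebra_simps)
        also have "\<dots> \<le> norm (f u - f x - (u - x) *\<^sub>R f' x) + norm (f v - f x - (v - x) *\<^sub>R f' x)"
          by (rule norm_triangle_ineq4)
        also have "\<dots> \<le> e1 * norm (u - x) + e1 * norm (v - x)"
        proof (rule add_mono)
          show "norm (f u - f x - (u - x) *\<^sub>R f' x) \<le> e1 * norm (u - x)"
            by (rule d(2)) (use \<open>u \<in> K\<close> ball xK kab xE in \<open>auto simp: dist_real_def\<close>)
          show "norm (f v - f x - (v - x) *\<^sub>R f' x) \<le> e1 * norm (v - x)"
            by (rule d(2)) (use \<open>v \<in> K\<close> ball xK kab xE in \<open>auto simp: dist_real_def\<close>)
        qed
        also have "\<dots> = e1 * (v - u)"
          using xK k by (auto simp: algebra_simps)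
        finally show "norm (T xk) \<le> e1 * Henstock_Kurzweil_Integration.content (snd xk)"
          using uv by (simp add: T_def xkd k)
      qed
      also have "\<dots> = e1 * (\<Sum>xk\<in>p1. Henstock_Kurzweil_Integration.content (snd xk))"
        by (simp add: sum_distrib_left)
      also have "\<dots> \<le> e1 * (\<Sum>xk\<in>p. Henstock_Kurzweil_Integration.content (snd xk))"
        using e1 pu finp by (intro mult_left_mono sum_mono2) auto
      also have "\<dots> = e1 * (b - a)" using cont_sum by (simp add: split_def)
      finally show ?thesis .
    qed
    have bound2: "(\<Sum>xk\<in>p2. norm (Henstock_Kurzweil_Integration.content (snd xk) *\<^sub>R f' (fst xk))) < e/4"
    proof -
      have "(\<Sum>xk\<in>p2. norm (Henstock_Kurzweil_Integration.content (snd xk) *\<^sub>R f' (fst xk)))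
          = (\<Sum>(x,k)\<in>p. Henstock_Kurzweil_Integration.content k *\<^sub>R I2 x)"
      proof -
        have "(\<Sum>(x,k)\<in>p. Henstock_Kurzweil_Integration.content k *\<^sub>R I2 x)
            = (\<Sum>xk\<in>p1. Henstock_Kurzweil_Integration.content (snd xk) *\<^sub>R (if fst xk \<in> E then norm (f' (fst xk)) else 0))
            + (\<Sum>xk\<in>p2. Henstock_Kurzweil_Integration.content (snd xk) *\<^sub>R (if fst xk \<in> E then norm (f' (fst xk)) else 0))"
          using pu fin12 by (simp add: sum.union_disjoint split_def I2_def)
        also have "\<dots> = (\<Sum>xk\<in>p2. norm (Henstock_Kurzweil_Integration.content (snd xk) *\<^sub>R f' (fst xk)))"
          by (auto simp: p1_def p2_def I2_def intro!: sum.cong)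
        finally show ?thesis by (simp add: I2_def)
      qed
      then show ?thesis using g3P[OF ptag f3] by simp
    qed
    have bound3: "(\<Sum>xk\<in>p2. norm (f (Sup (snd xk)) - f (Inf (snd xk)))) < e/4"
    proof -
      have zero: "norm (f (Sup (snd xk)) - f (Inf (snd xk))) = 0" if "xk \<in> p2 - p3" for xk
      proof -
        obtain x K where xkd: "xk = (x,K)" by (cases xk)
        have "(x,K) \<in> p" "Henstock_Kurzweil_Integration.content K = 0" using that by (auto simp: p2_def p3_def xkd)
        then obtain u v where "K = {u..v}" "u \<le> v" "Henstock_Kurzweil_Integration.content K = 0" using K by blast
        then show ?thesis by (simp add: xkd)
      qed
      have "(\<Sum>xk\<in>p2. norm (f (Sup (snd xk)) - f (Inf (snd xk))))
          = (\<Sum>xk\<in>p3. norm (f (Sup (snd xk)) - f (Inf (snd xk))))"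
        using zero fin12 by (intro sum.mono_neutral_right) (auto simp: p3_def)
      also have "\<dots> < e/4"
      proof -
        obtain h where h: "bij_betw h {0..<card p3} p3"
          using ex_bij_betw_nat_finite[OF fin12(3)] by blast
        define n where "n = card p3"
        define aa where "aa = (\<lambda>i. Inf (snd (h i)))"
        define bb where "bb = (\<lambda>i. Sup (snd (h i)))"
        have hin: "h i \<in> p3" if "i < n" for i
          using h that by (auto simp: n_def bij_betw_def)
        have p3p: "xk \<in> p" if "xk \<in> p3" for xk using that by (auto simp: p3_def p2_def)
        have iv: "\<exists>u v. snd (h i) = {u..v} \<and> u < v" if "i < n" for i
        proof -
          obtain x K where xkd: "h i = (x,K)" by (cases "h i")
          have "(x,K) \<in> p" "Henstock_Kurzweil_Integration.content K \<noteq> 0" using hin[OF that] p3p by (auto simp: xkd p3_def)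
          then obtain u v where "K = {u..v}" "u \<le> v" "Henstock_Kurzweil_Integration.content K \<noteq> 0" using K by blast
          then show ?thesis by (auto simp: xkd)
        qed
        have c1: "\<forall>i<n. a \<le> aa i \<and> aa i \<le> bb i \<and> bb i \<le> b"
        proof (intro allI impI)
          fix i assume i: "i < n"
          obtain x K where xkd: "h i = (x,K)" by (cases "h i")
          have "K \<subseteq> {a..b}" using K[of x K] hin[OF i] p3p xkd by auto
          moreover obtain u v where "K = {u..v}" "u < v" using iv[OF i] xkd by auto
          ultimately show "a \<le> aa i \<and> aa i \<le> bb i \<and> bb i \<le> b"
            by (auto simp: aa_def bb_def xkd)
        qed
        have c2: "\<forall>i<n. \<forall>j<n. i \<noteq> j \<longrightarrow> bb i \<le> aa j \<or> bb j \<le> aa i"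
        proof (intro allI impI)
          fix i j assume i: "i < n" and j: "j < n" and ij: "i \<noteq> j"
          have "h i \<noteq> h j" using h i j ij by (auto simp: n_def bij_betw_def inj_on_def)
          obtain x K where xkd: "h i = (x,K)" by (cases "h i")
          obtain x' K' where xkd': "h j = (x',K')" by (cases "h j")
          obtain u v where uv: "K = {u..v}" "u < v" using iv[OF i] xkd by auto
          obtain u' v' where uv': "K' = {u'..v'}" "u' < v'" using iv[OF j] xkd' by auto
          have "interior K \<inter> interior K' = {}"
            using ptag hin[OF i] hin[OF j] p3p \<open>h i \<noteq> h j\<close> xkd xkd'
            by (metis tagged_division_ofD(5))
          then have "{u<..<v} \<inter> {u'<..<v'} = {}" using uv uv' by simp
          then have "v \<le> u' \<or> v' \<le> u" using intervals_sep uv uv' by blast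
          then show "bb i \<le> aa j \<or> bb j \<le> aa i"
            using uv uv' by (auto simp: aa_def bb_def xkd xkd')
        qed
        have c3: "(\<Sum>i<n. bb i - aa i) < \<delta>"
        proof -
          have "(\<Sum>i<n. bb i - aa i) = (\<Sum>i\<in>{0..<n}. Henstock_Kurzweil_Integration.content (snd (h i)))"
          proof (unfold lessThan_atLeast0, intro sum.cong refl)
            fix i assume "i \<in> {0..<n}"
            then have "i < n" by simp
            then obtain u v where "snd (h i) = {u..v}" "u < v" using iv by blast
            then show "bb i - aa i = Henstock_Kurzweil_Integration.content (snd (h i))"
              by (simp add: aa_def bb_def)
          qed
          also have "\<dots> = (\<Sum>xk\<in>p3. Henstock_Kurzweil_Integration.content (snd xk))"
            using sum.reindex_bij_betw[OF h, of "\<lambda>xk. Henstock_Kurzweil_Integration.content (snd xk)"] by (simp add: n_def)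
          also have "\<dots> \<le> (\<Sum>(x,k)\<in>p. Henstock_Kurzweil_Integration.content k *\<^sub>R indicat_real E x)"
          proof -
            have "(\<Sum>xk\<in>p3. Henstock_Kurzweil_Integration.content (snd xk)) = (\<Sum>xk\<in>p3. Henstock_Kurzweil_Integration.content (snd xk) *\<^sub>R indicat_real E (fst xk))"
              by (auto simp: p3_def p2_def intro!: sum.cong)
            also have "\<dots> \<le> (\<Sum>xk\<in>p. Henstock_Kurzweil_Integration.content (snd xk) *\<^sub>R indicat_real E (fst xk))"
              using finp p3p by (intro sum_mono2) auto
            finally show ?thesis by (simp add: split_def)
          qed
          also have "\<dots> < \<delta>" using g2P[OF ptag f2] by simp
          finally show ?thesis .
        qed
        have "(\<Sum>i<n. norm (f (bb i) - f (aa i))) < e/4"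
          by (rule \<delta>P[OF c1 c2 c3])
        moreover have "(\<Sum>i<n. norm (f (bb i) - f (aa i))) = (\<Sum>xk\<in>p3. norm (f (Sup (snd xk)) - f (Inf (snd xk))))"
          using sum.reindex_bij_betw[OF h, of "\<lambda>xk. norm (f (Sup (snd xk)) - f (Inf (snd xk)))"]
          by (simp add: n_def aa_def bb_def lessThan_atLeast0)
        ultimately show ?thesis by simp
      qed
      finally show ?thesis .
    qed
    have "norm (\<Sum>xk\<in>p2. T xk) \<le> (\<Sum>xk\<in>p2. norm (Henstock_Kurzweil_Integration.content (snd xk) *\<^sub>R f' (fst xk)))
         + (\<Sum>xk\<in>p2. norm (f (Sup (snd xk)) - f (Inf (snd xk))))"
    proof -
      have "norm (\<Sum>xk\<in>p2. T xk) \<le> (\<Sum>xk\<in>p2. norm (T xk))" by (rule norm_sum)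
      also have "\<dots> \<le> (\<Sum>xk\<in>p2. norm (Henstock_Kurzweil_Integration.content (snd xk) *\<^sub>R f' (fst xk)) + norm (f (Sup (snd xk)) - f (Inf (snd xk))))"
        by (intro sum_mono) (auto simp: T_def split_def abs_of_nonneg content_pos_le intro: order_trans[OF norm_triangle_ineq4])
      finally show ?thesis by (simp add: sum.distrib)
    qed
    then have bound23: "norm (\<Sum>xk\<in>p2. T xk) < e/2" using bound2 bound3 by linarith
    have "e1 * (b - a) \<le> e / 4"
    proof -
      have "e1 * (b - a) \<le> e1 * (b - a + 1)" using e1 by simp
      also have "\<dots> = e / 4"
      proof -
        have "b - a + 1 \<noteq> 0" using ab by simp
        then show ?thesis by (simp add: e1_def field_simps)
      qed
      finally show ?thesis .
    qed
    moreover have "norm (\<Sum>xk\<in>p. T xk) = norm ((\<Sum>xk\<in>p1. T xk) + (\<Sum>xk\<in>p2. T xk))"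
      using sumsplit by simp
    ultimately have "norm (\<Sum>xk\<in>p. T xk) < e"
      using e sumsplit bound1 bound23 norm_triangle_ineq[of "\<Sum>xk\<in>p1. T xk" "\<Sum>xk\<in>p2. T xk"] by linarith
    then show "norm ((\<Sum>(x, k)\<in>p. Henstock_Kurzweil_Integration.content k *\<^sub>R f' x) - (f b - f a)) < e"
      using eqT by simp
  qed
qed

lemma ac_cont:
  assumes ac: "abs_continuous_on a b f"
  shows "continuous_on {a..b} f"
  unfolding continuous_on_iff
proof (intro ballI allI impI)
  fix x e :: real assume x: "x \<in> {a..b}" and e: "e > 0"
  from ac[unfolded abs_continuous_on_def, rule_format, OF e]
  obtain d where d: "d > 0" and dP: "\<forall>(n::nat) (aa::nat \<Rightarrow> real) (bb::nat \<Rightarrow> real).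
        (\<forall>i<n. a \<le> aa i \<and> aa i \<le> bb i \<and> bb i \<le> b) \<and>
        (\<forall>i<n. \<forall>j<n. i \<noteq> j \<longrightarrow> bb i \<le> aa j \<or> bb j \<le> aa i) \<and>
        (\<Sum>i<n. bb i - aa i) < d
        \<longrightarrow> (\<Sum>i<n. norm (f (bb i) - f (aa i))) < e"
    by (elim exE conjE)
  show "\<exists>d>0. \<forall>x'\<in>{a..b}. dist x' x < d \<longrightarrow> dist (f x') (f x) < e"
  proof (intro exI conjI ballI impI)
    show "d > 0" by fact
    fix x' assume x': "x' \<in> {a..b}" and dx: "dist x' x < d"
    have "(\<Sum>i<(1::nat). norm (f ((\<lambda>_. max x x') i) - f ((\<lambda>_. min x x') i))) < e"
    proof -
      have h: "max x x' - min x x' < d" "min x x' \<le> max x x'" "a \<le> min x x'" "max x x' \<le> b"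
        using x x' dx by (auto simp: dist_real_def max_def min_def)
      show ?thesis
        using dP[rule_format, of 1 "\<lambda>_. min x x'" "\<lambda>_. max x x'"] h by simp
    qed
    then show "dist (f x') (f x) < e"
      by (cases "x \<le> x'") (auto simp: dist_norm max_def min_def norm_minus_commute)
  qed
qed

lemma ac_mult:
  fixes f g :: "real \<Rightarrow> 'a::real_normed_algebra"
  assumes acf: "abs_continuous_on a b f" and acg: "abs_continuous_on a b g"
  shows "abs_continuous_on a b (\<lambda>x. f x * g x)"
proof -
  have "compact (f ` {a..b})" "compact (g ` {a..b})"
    using ac_cont[OF acf] ac_cont[OF acg] compact_continuous_image by blast+
  then have "bounded (f ` {a..b} \<union> g ` {a..b})" by (simp add: compact_imp_bounded)
  then obtain M where M: "M > 0" and Mb: "\<And>z. z \<in> f ` {a..b} \<union> g ` {a..b} \<Longrightarrow> norm z \<le> M"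
    using bounded_pos by metis
  have Mf: "norm (f x) \<le> M" and Mg: "norm (g x) \<le> M" if "x \<in> {a..b}" for x
    using Mb that by auto
  show ?thesis
    unfolding abs_continuous_on_def
  proof (intro allI impI)
    fix e :: real assume e: "e > 0"
    define e' where "e' = e / (2 * M)"
    have e': "e' > 0" using e M by (simp add: e'_def)
    from acf[unfolded abs_continuous_on_def, rule_format, OF e']
    obtain d1 where d1: "d1 > 0" and d1P: "\<forall>(n::nat) (aa::nat \<Rightarrow> real) (bb::nat \<Rightarrow> real).
        (\<forall>i<n. a \<le> aa i \<and> aa i \<le> bb i \<and> bb i \<le> b) \<and>
        (\<forall>i<n. \<forall>j<n. i \<noteq> j \<longrightarrow> bb i \<le> aa j \<or> bb j \<le> aa i) \<and>
        (\<Sum>i<n. bb i - aa i) < d1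
        \<longrightarrow> (\<Sum>i<n. norm (f (bb i) - f (aa i))) < e'"
      by (elim exE conjE)
    from acg[unfolded abs_continuous_on_def, rule_format, OF e']
    obtain d2 where d2: "d2 > 0" and d2P: "\<forall>(n::nat) (aa::nat \<Rightarrow> real) (bb::nat \<Rightarrow> real).
        (\<forall>i<n. a \<le> aa i \<and> aa i \<le> bb i \<and> bb i \<le> b) \<and>
        (\<forall>i<n. \<forall>j<n. i \<noteq> j \<longrightarrow> bb i \<le> aa j \<or> bb j \<le> aa i) \<and>
        (\<Sum>i<n. bb i - aa i) < d2
        \<longrightarrow> (\<Sum>i<n. norm (g (bb i) - g (aa i))) < e'"
      by (elim exE conjE)
    show "\<exists>\<delta>>0. \<forall>(n::nat) (aa::nat \<Rightarrow> real) (bb::nat \<Rightarrow> real).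
        (\<forall>i<n. a \<le> aa i \<and> aa i \<le> bb i \<and> bb i \<le> b) \<and>
        (\<forall>i<n. \<forall>j<n. i \<noteq> j \<longrightarrow> bb i \<le> aa j \<or> bb j \<le> aa i) \<and>
        (\<Sum>i<n. bb i - aa i) < \<delta>
        \<longrightarrow> (\<Sum>i<n. norm (f (bb i) * g (bb i) - f (aa i) * g (aa i))) < e"
    proof (intro exI conjI allI impI)
      show "min d1 d2 > 0" using d1 d2 by simp
      fix n :: nat and aa bb :: "nat \<Rightarrow> real"
      assume H: "(\<forall>i<n. a \<le> aa i \<and> aa i \<le> bb i \<and> bb i \<le> b) \<and>
        (\<forall>i<n. \<forall>j<n. i \<noteq> j \<longrightarrow> bb i \<le> aa j \<or> bb j \<le> aa i) \<and>
        (\<Sum>i<n. bb i - aa i) < min d1 d2"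
      have sf: "(\<Sum>i<n. norm (f (bb i) - f (aa i))) < e'" using d1P H by auto
      have sg: "(\<Sum>i<n. norm (g (bb i) - g (aa i))) < e'" using d2P H by auto
      have "(\<Sum>i<n. norm (f (bb i) * g (bb i) - f (aa i) * g (aa i)))
          \<le> (\<Sum>i<n. M * norm (g (bb i) - g (aa i)) + M * norm (f (bb i) - f (aa i)))"
      proof (rule sum_mono)
        fix i assume "i \<in> {..<n}"
        then have ab: "aa i \<in> {a..b}" "bb i \<in> {a..b}" using H by auto
        have "norm (f (bb i) * g (bb i) - f (aa i) * g (aa i))
            = norm (f (bb i) * (g (bb i) - g (aa i)) + (f (bb i) - f (aa i)) * g (aa i))"
          by (simp add: algebra_simps)
        also have "\<dots> \<le> norm (f (bb i) * (g (bb i) - g (aa i))) + norm ((f (bb i) - f (aa i)) * g (aa i))"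
          by (rule norm_triangle_ineq)
        also have "\<dots> \<le> norm (f (bb i)) * norm (g (bb i) - g (aa i)) + norm (f (bb i) - f (aa i)) * norm (g (aa i))"
          by (intro add_mono norm_mult_ineq)
        also have "\<dots> \<le> M * norm (g (bb i) - g (aa i)) + norm (f (bb i) - f (aa i)) * M"
          using Mf[OF ab(2)] Mg[OF ab(1)] by (intro add_mono mult_right_mono mult_left_mono) auto
        finally show "norm (f (bb i) * g (bb i) - f (aa i) * g (aa i))
            \<le> M * norm (g (bb i) - g (aa i)) + M * norm (f (bb i) - f (aa i))" by (simp add: mult.commute)
      qed
      also have "\<dots> = M * (\<Sum>i<n. norm (g (bb i) - g (aa i))) + M * (\<Sum>i<n. norm (f (bb i) - f (aa i)))"
        by (simp add: sum.distrib sum_distrib_left)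
      also have "\<dots> < M * e' + M * e'"
        using sf sg M by (intro add_strict_mono mult_strict_left_mono) auto
      also have "\<dots> = e" using M by (simp add: e'_def)
      finally show "(\<Sum>i<n. norm (f (bb i) * g (bb i) - f (aa i) * g (aa i))) < e" .
    qed
  qed
qed

lemma ac_isometry:
  fixes f :: "real \<Rightarrow> 'a::real_normed_vector" and h :: "'a \<Rightarrow> 'b::real_normed_vector"
  assumes ac: "abs_continuous_on a b f" and h: "\<And>u v. norm (h u - h v) = norm (u - v)"
  shows "abs_continuous_on a b (\<lambda>x. h (f x))"
  using ac unfolding abs_continuous_on_def h by simp

lemma cs_integral:
  fixes f g :: "real \<Rightarrow> real"
  assumes f2: "(\<lambda>x. f x ^ 2) integrable_on S" and g2: "(\<lambda>x. g x ^ 2) integrable_on S"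
    and fg: "(\<lambda>x. f x * g x) integrable_on S"
  shows "integral S (\<lambda>x. f x * g x) \<le> sqrt (integral S (\<lambda>x. f x ^ 2)) * sqrt (integral S (\<lambda>x. g x ^ 2))"
proof -
  define A where "A = integral S (\<lambda>x. f x ^ 2)"
  define B where "B = integral S (\<lambda>x. g x ^ 2)"
  define C where "C = integral S (\<lambda>x. f x * g x)"
  have A0: "A \<ge> 0" unfolding A_def by (rule integral_nonneg[OF f2]) auto
  have B0: "B \<ge> 0" unfolding B_def by (rule integral_nonneg[OF g2]) auto
  have key: "0 \<le> t^2 * A - 2 * t * C + B" for t :: real
  proof -
    have i1: "(\<lambda>x. t^2 * f x ^ 2) integrable_on S" using f2 by (rule integrable_on_mult_right)
    have i2: "(\<lambda>x. (2 * t) * (f x * g x)) integrable_on S" using fg by (rule integrable_on_mult_right)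
    have "(\<lambda>x. t^2 * f x ^ 2 - (2 * t) * (f x * g x) + g x ^ 2) integrable_on S"
      using i1 i2 g2 by (intro integrable_add integrable_diff)
    then have "0 \<le> integral S (\<lambda>x. t^2 * f x ^ 2 - (2 * t) * (f x * g x) + g x ^ 2)"
    proof (rule integral_nonneg)
      fix x
      have "t^2 * f x ^ 2 - (2 * t) * (f x * g x) + g x ^ 2 = (t * f x - g x)^2"
        by (simp add: power2_eq_square algebra_simps)
      then show "0 \<le> t^2 * f x ^ 2 - (2 * t) * (f x * g x) + g x ^ 2" by simp
    qed
    also have "integral S (\<lambda>x. t^2 * f x ^ 2 - (2 * t) * (f x * g x) + g x ^ 2) = t^2 * A - 2 * t * C + B"
      using i1 i2 g2 by (simp add: integral_add integral_diff integrable_diff A_def B_def C_def)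
    finally show ?thesis .
  qed
  have "C \<le> sqrt A * sqrt B"
  proof (cases "A = 0")
    case True
    have "C \<le> 0"
    proof (rule ccontr)
      assume "\<not> C \<le> 0"
      then have "C > 0" by simp
      have "0 \<le> ((B + 1) / (2 * C))^2 * A - 2 * ((B + 1) / (2 * C)) * C + B" by (rule key)
      also have "\<dots> = -1" using True \<open>C > 0\<close> by (simp add: field_simps)
      finally show False by simp
    qed
    also have "0 \<le> sqrt A * sqrt B" using A0 B0 by simp
    finally show ?thesis .
  next
    case False
    then have Ap: "A > 0" using A0 by simp
    have "0 \<le> (C / A)^2 * A - 2 * (C / A) * C + B" by (rule key)
    also have "\<dots> = B - C^2 / A" using Ap by (simp add: field_simps power2_eq_square)
    finally have "C^2 \<le> A * B" using Ap by (simp add: field_simps)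
    then have "sqrt (C^2) \<le> sqrt (A * B)" by (rule real_sqrt_le_mono)
    then show ?thesis by (simp add: real_sqrt_mult)
  qed
  then show ?thesis by (simp add: A_def B_def C_def)
qed



lemma AE_negligible:
  assumes "AE x in lebesgue. P x"
  obtains N where "negligible N" "\<And>x. x \<notin> N \<Longrightarrow> P x"
proof -
  from AE_E[OF assms] obtain N where N: "{x \<in> space lebesgue. \<not> P x} \<subseteq> N"
    "emeasure lebesgue N = 0" "N \<in> sets lebesgue" by metis
  have "N \<in> null_sets lebesgue" using N(2,3) by (rule null_setsI)
  then have "negligible N" by (simp add: negligible_iff_null_sets)
  moreover have "P x" if "x \<notin> N" for x using N(1) that by auto
  ultimately show ?thesis using that by blast
qed

theorem theorem1p3:
  fixes q w wd :: "real \<Rightarrow> real" and \<epsilon>2 :: real and lam :: complex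
  assumes q_int: "set_integrable lebesgue {-1..1} q"
    and w_int: "set_integrable lebesgue {-1..1} w"
    and w_nonzero: "AE x in lebesgue. x \<in> {-1..1} \<longrightarrow> w x \<noteq> 0"
    and w_pos: "emeasure lebesgue {x \<in> {-1..1}. w x > 0} > 0"
    and w_neg: "emeasure lebesgue {x \<in> {-1..1}. w x < 0} > 0"
    and w_ac: "abs_continuous_on (-1) 1 w"
    and wd_deriv: "AE x in lebesgue. x \<in> {-1..1} \<longrightarrow> (w has_real_derivative wd x) (at x)"
    and wd_meas: "set_borel_measurable lebesgue {-1..1} wd"
    and wd_L2: "set_integrable lebesgue {-1..1} (\<lambda>x. (wd x)^2)"
    and eps_pos: "\<epsilon>2 > 0"
    and eps_small: "8 * (LINT x:{-1..1}|lebesgue. max 0 (- q x))^2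
                      * measure lebesgue {x \<in> {-1..1}. (w x)^2 < \<epsilon>2} < 1"
    and nonreal: "Im lam \<noteq> 0"
    and eig: "is_eigenvalue q w lam"
  shows "\<bar>Re lam\<bar> \<le> 8 / \<epsilon>2 * (LINT x:{-1..1}|lebesgue. max 0 (- q x))^2
                     * (3 * Sup ((\<lambda>x. \<bar>w x\<bar>) ` {-1..1})
                        + sqrt (LINT x:{-1..1}|lebesgue. (wd x)^2))
       \<and> \<bar>Im lam\<bar> \<le> 8 / \<epsilon>2 * sqrt (LINT x:{-1..1}|lebesgue. (wd x)^2)
                     * (LINT x:{-1..1}|lebesgue. max 0 (- q x))^2"
proof -
  define I where "I = {-1..(1::real)}"
  have Il: "I \<in> sets lebesgue" unfolding I_def by simp
  have Ic: "compact I" "I \<noteq> {}" unfolding I_def by auto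
  from eig obtain y y1 :: "real \<Rightarrow> complex" where
       ynz: "\<exists>x\<in>{-1..1}. y x \<noteq> 0" and acy: "abs_continuous_on (-1) 1 y"
    and acy1: "abs_continuous_on (-1) 1 y1"
    and yd: "\<forall>x\<in>{-1..1}. (y has_vector_derivative y1 x) (at x within {-1..1})"
    and ae: "AE x in lebesgue. x \<in> {-1..1} \<longrightarrow>
           (\<exists>d. (y1 has_vector_derivative d) (at x) \<and>
                - d + complex_of_real (q x) * y x = lam * complex_of_real (w x) * y x)"
    and ym: "y (-1) = 0" and yp: "y 1 = 0"
    unfolding is_eigenvalue_def by (elim exE conjE) 
  from AE_negligible[OF ae] obtain N1 where N1: "negligible N1" and N1P: "\<And>x. x \<notin> N1 \<Longrightarrow> x \<in> {-1..1} \<longrightarrow>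
           (\<exists>d. (y1 has_vector_derivative d) (at x) \<and>
                - d + complex_of_real (q x) * y x = lam * complex_of_real (w x) * y x)"
    by metis
  from AE_negligible[OF wd_deriv] obtain N2 where N2: "negligible N2" and N2P: "\<And>x. x \<notin> N2 \<Longrightarrow> x \<in> {-1..1} \<longrightarrow>
           (w has_real_derivative wd x) (at x)"
    by metis
  define E where "E = N1 \<union> N2"
  have negE: "negligible E"
    using N1 N2 unfolding E_def by simp
  define ypp where "ypp = (\<lambda>x. (complex_of_real (q x) - lam * complex_of_real (w x)) * y x)"
  have d_y1: "(y1 has_vector_derivative ypp x) (at x)" if xI: "x \<in> I" and xE: "x \<notin> E" for x
  proof -
    have "x \<notin> N1" using xE by (auto simp: E_def)
    then obtain d where "(y1 has_vector_derivative d) (at x)"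
       "- d + complex_of_real (q x) * y x = lam * complex_of_real (w x) * y x"
      using N1P[of x] xI by (auto simp: I_def)
    moreover have "d = ypp x" using calculation(2) by (simp add: ypp_def algebra_simps)
    ultimately show ?thesis by simp
  qed
  have d_w: "(w has_real_derivative wd x) (at x)" if "x \<in> I" "x \<notin> E" for x
  proof -
    have "x \<notin> N2" using that by (auto simp: E_def)
    then show ?thesis using N2P[of x] that by (auto simp: I_def)
  qed
  have d_y: "(y has_vector_derivative y1 x) (at x within I)" if "x \<in> I" for x
    using yd that by (simp add: I_def)
  have cy: "continuous_on I y" using ac_cont[OF acy] by (simp add: I_def)
  have cy1: "continuous_on I y1" using ac_cont[OF acy1] by (simp add: I_def)
  have cw: "continuous_on I w" using ac_cont[OF w_ac] by (simp add: I_def)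
  have Icb: "I = cbox (-1) 1" by (simp add: I_def)
  define yy where "yy = (\<lambda>x. (cmod (y x))^2)"
  define yy1 where "yy1 = (\<lambda>x. (cmod (y1 x))^2)"
  define qn where "qn = (\<lambda>x. max 0 (- q x))"
  have cyy: "continuous_on I yy" unfolding yy_def by (intro continuous_intros cy)
  have cyy1: "continuous_on I yy1" unfolding yy1_def by (intro continuous_intros cy1)
  have cyyw: "continuous_on I (\<lambda>x. yy x * w x)" by (intro continuous_intros cyy cw)
  have bnd: "bounded (f ` I)" if "continuous_on I f" for f :: "real \<Rightarrow> real"
    using compact_imp_bounded[OF compact_continuous_image[OF that Ic(1)]] .
  have mble: "f \<in> borel_measurable (lebesgue_on I)" if "continuous_on I f" for f :: "real \<Rightarrow> real"
    using continuous_imp_measurable_on_sets_lebesgue[OF that Il] .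
  have bprod: "(\<lambda>x. f x * g x) absolutely_integrable_on I"
    if "continuous_on I f" "g absolutely_integrable_on I" for f g :: "real \<Rightarrow> real"
    using absolutely_integrable_bounded_measurable_product_real[OF mble[OF that(1)] Il bnd[OF that(1)] that(2)] .
  have acont: "f absolutely_integrable_on I" if "continuous_on I f" for f :: "real \<Rightarrow> real"
    using absolutely_integrable_continuous[of "-1" 1 f] that by (simp add: I_def)
  have qI: "q absolutely_integrable_on I" using q_int by (simp add: I_def)
  have wI: "w absolutely_integrable_on I" using w_int by (simp add: I_def)
  have mq: "q \<in> borel_measurable (lebesgue_on I)" using qI absolutely_integrable_measurable[OF Il] by blast
  have qnI: "qn absolutely_integrable_on I"
  proof (rule measurable_bounded_by_integrable_imp_absolutely_integrable[OF _ Il])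
    show "qn \<in> borel_measurable (lebesgue_on I)" unfolding qn_def
      by (intro borel_measurable_max borel_measurable_const borel_measurable_uminus mq)
    show "(\<lambda>x. norm (q x)) integrable_on I" using qI absolutely_integrable_on_def by blast
    show "norm (qn x) \<le> norm (q x)" if "x \<in> I" for x by (simp add: qn_def)
  qed
  have mwd: "wd \<in> borel_measurable (lebesgue_on I)"
    using wd_meas unfolding set_borel_measurable_def I_def
    by (subst borel_measurable_restrict_space_iff) auto
  have wd2I: "(\<lambda>x. (wd x)^2) integrable_on I"
    using set_lebesgue_integral_eq_integral(1)[OF wd_L2] by (simp add: I_def)
  have wdI: "wd absolutely_integrable_on I"
  proof (rule measurable_bounded_by_integrable_imp_absolutely_integrable[OF mwd Il])
    show "(\<lambda>x. 1 + (wd x)^2) integrable_on I" using wd2I unfolding I_def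
      by (intro integrable_add integrable_const_ivl) auto
    show "norm (wd x) \<le> 1 + (wd x)^2" if "x \<in> I" for x
    proof -
      have h: "(\<bar>wd x\<bar> - 1)^2 = (wd x)^2 - 2*\<bar>wd x\<bar> + 1"
        by (simp add: power2_eq_square algebra_simps)
      have "0 \<le> (\<bar>wd x\<bar> - 1)^2" by simp
      moreover have "0 \<le> (wd x)^2" by simp
      ultimately show ?thesis using h by simp
    qed
  qed
  have iq: "(\<lambda>x. yy x * q x) absolutely_integrable_on I" by (rule bprod[OF cyy qI])
  have iw: "(\<lambda>x. yy x * w x) absolutely_integrable_on I" by (rule bprod[OF cyy wI])
  have iqn: "(\<lambda>x. yy x * qn x) absolutely_integrable_on I" by (rule bprod[OF cyy qnI])
  have iqw: "(\<lambda>x. (yy x * w x) * q x) absolutely_integrable_on I" by (rule bprod[OF cyyw qI])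
  have iyy: "yy absolutely_integrable_on I" by (rule acont[OF cyy])
  have iyy1: "yy1 absolutely_integrable_on I" by (rule acont[OF cyy1])
  have iyy1w: "(\<lambda>x. yy1 x * w x) absolutely_integrable_on I" by (rule bprod[OF cyy1 wI])
  have iw2: "(\<lambda>x. (yy x * w x) * w x) absolutely_integrable_on I" by (rule bprod[OF cyyw wI])
  have ion: "f integrable_on I" if "f absolutely_integrable_on I" for f :: "real \<Rightarrow> real"
    using that absolutely_integrable_on_def by blast
  have hof: "((\<lambda>x. complex_of_real (f x)) has_integral complex_of_real (integral I f)) I"
    if "f absolutely_integrable_on I" for f :: "real \<Rightarrow> real"
    by (rule has_integral_of_real[OF integrable_integral[OF ion[OF that]]])
  have cnj_iso: "norm (cnj u - cnj v) = norm (u - v)" for u v :: complex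
    by (metis complex_cnj_diff complex_mod_cnj)
  have of_iso: "norm (complex_of_real u - complex_of_real v) = norm (u - v)" for u v :: real
    by (metis of_real_diff norm_of_real real_norm_def)
  have acF1: "abs_continuous_on (-1) 1 (\<lambda>x. y1 x * cnj (y x))"
    by (rule ac_mult[OF acy1 ac_isometry[OF acy cnj_iso]])
  have acW: "abs_continuous_on (-1) 1 (\<lambda>x. complex_of_real (w x))"
    by (rule ac_isometry[OF w_ac of_iso])
  have acF2: "abs_continuous_on (-1) 1 (\<lambda>x. y1 x * cnj (y x) * complex_of_real (w x))"
    by (rule ac_mult[OF acF1 acW])
  define D1 where "D1 = (\<lambda>x. complex_of_real (yy1 x) + complex_of_real (yy x * q x)
       - lam * complex_of_real (yy x * w x))"
  have dF1: "((\<lambda>x. y1 x * cnj (y x)) has_vector_derivative D1 x) (at x within I)"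
    if xI: "x \<in> I" and xE: "x \<notin> E" for x
  proof -
    have "((\<lambda>x. y1 x * cnj (y x)) has_vector_derivative (y1 x * cnj (y1 x) + ypp x * cnj (y x))) (at x within I)"
      by (rule has_vector_derivative_mult[OF has_vector_derivative_at_within[OF d_y1[OF xI xE]]
            has_vector_derivative_cnj[OF d_y[OF xI]]])
    moreover have "y1 x * cnj (y1 x) + ypp x * cnj (y x) = D1 x"
    proof -
      have n1: "y1 x * cnj (y1 x) = complex_of_real (yy1 x)" unfolding yy1_def by (rule complex_norm_square[symmetric])
      have n2: "y x * cnj (y x) = complex_of_real (yy x)" unfolding yy_def by (rule complex_norm_square[symmetric])
      have "ypp x * cnj (y x) = (complex_of_real (q x) - lam * complex_of_real (w x)) * (y x * cnj (y x))"
        by (simp add: ypp_def mult.assoc)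
      also have "\<dots> = (complex_of_real (q x) - lam * complex_of_real (w x)) * complex_of_real (yy x)"
        by (simp add: n2)
      finally show ?thesis using n1 by (simp add: D1_def algebra_simps)
    qed
    ultimately show ?thesis by simp
  qed
  have ftc1: "(D1 has_integral (y1 1 * cnj (y 1) - y1 (-1) * cnj (y (-1)))) {-1..1}"
    by (rule ac_ftc[OF _ acF1 negE]) (use dF1 in \<open>auto simp: I_def\<close>)
  then have ftc1': "(D1 has_integral 0) I" using ym yp by (simp add: I_def)
  define A2 where "A2 = integral I yy1"
  define Iq where "Iq = integral I (\<lambda>x. yy x * q x)"
  define Iw where "Iw = integral I (\<lambda>x. yy x * w x)"
  have "(D1 has_integral (complex_of_real A2 + complex_of_real Iq - lam * complex_of_real Iw)) I"
    unfolding D1_def A2_def Iq_def Iw_def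
    by (intro has_integral_add has_integral_diff has_integral_mult_right hof iyy1 iq iw)
  then have eq1: "complex_of_real A2 + complex_of_real Iq - lam * complex_of_real Iw = 0"
    using ftc1' has_integral_unique by blast
  define D2 where "D2 = (\<lambda>x. y1 x * cnj (y x) * complex_of_real (wd x) + complex_of_real (yy1 x * w x)
       + complex_of_real ((yy x * w x) * q x) - lam * complex_of_real ((yy x * w x) * w x))"
  have dF2: "((\<lambda>x. y1 x * cnj (y x) * complex_of_real (w x)) has_vector_derivative D2 x) (at x within I)"
    if xI: "x \<in> I" and xE: "x \<notin> E" for x
  proof -
    have "((\<lambda>x. y1 x * cnj (y x) * complex_of_real (w x)) has_vector_derivative
        (y1 x * cnj (y x) * complex_of_real (wd x) + D1 x * complex_of_real (w x))) (at x within I)"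
      by (rule has_vector_derivative_mult[OF dF1[OF xI xE]
            has_vector_derivative_of_real[OF has_field_derivative_at_within[OF d_w[OF xI xE]]]])
    moreover have "y1 x * cnj (y x) * complex_of_real (wd x) + D1 x * complex_of_real (w x) = D2 x"
      by (simp add: D1_def D2_def algebra_simps)
    ultimately show ?thesis by simp
  qed
  have ftc2: "(D2 has_integral (y1 1 * cnj (y 1) * complex_of_real (w 1)
      - y1 (-1) * cnj (y (-1)) * complex_of_real (w (-1)))) {-1..1}"
    by (rule ac_ftc[OF _ acF2 negE]) (use dF2 in \<open>auto simp: I_def\<close>)
  then have ftc2': "(D2 has_integral 0) I" using ym yp by (simp add: I_def)
  define Zf where "Zf = (\<lambda>x. y1 x * cnj (y x) * complex_of_real (wd x))"
  define gz where "gz = (\<lambda>x. (cmod (y1 x) * cmod (y x)) * norm (wd x))"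
  have cyy': "continuous_on I (\<lambda>x. cmod (y1 x) * cmod (y x))" by (intro continuous_intros cy cy1)
  have gzI: "gz absolutely_integrable_on I"
    unfolding gz_def using bprod[OF cyy' absolutely_integrable_norm[OF wdI]] by (simp add: o_def)
  have Zf_norm: "norm (Zf x) = gz x" for x
    by (simp add: Zf_def gz_def norm_mult)
  have ZfI: "Zf absolutely_integrable_on I"
  proof (rule measurable_bounded_by_integrable_imp_absolutely_integrable[OF _ Il])
    have m1: "(\<lambda>x. y1 x * cnj (y x)) \<in> borel_measurable (lebesgue_on I)"
      by (rule continuous_imp_measurable_on_sets_lebesgue[OF _ Il]) (intro continuous_intros cy cy1)
    have m2: "(\<lambda>x. complex_of_real (wd x)) \<in> borel_measurable (lebesgue_on I)"
      using measurable_compose[OF mwd borel_measurable_of_real] by (simp add: o_def)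
    show "Zf \<in> borel_measurable (lebesgue_on I)" unfolding Zf_def
      by (rule borel_measurable_times[OF m1 m2])
    show "gz integrable_on I" using gzI ion by blast
    show "norm (Zf x) \<le> gz x" if "x \<in> I" for x by (simp add: Zf_norm)
  qed
  define Z where "Z = integral I Zf"
  define Iaw where "Iaw = integral I (\<lambda>x. yy1 x * w x)"
  define Iqw where "Iqw = integral I (\<lambda>x. (yy x * w x) * q x)"
  define W where "W = integral I (\<lambda>x. (yy x * w x) * w x)"
  have ZfI': "(Zf has_integral Z) I" unfolding Z_def
    using ZfI absolutely_integrable_on_def integrable_integral by blast
  have "(D2 has_integral (Z + complex_of_real Iaw + complex_of_real Iqw - lam * complex_of_real W)) I"
    unfolding D2_def Iaw_def Iqw_def W_def
    by (intro has_integral_add has_integral_diff has_integral_mult_right hof iyy1w iqw iw2 ZfI'[unfolded Zf_def])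
  then have eq2: "Z + complex_of_real Iaw + complex_of_real Iqw - lam * complex_of_real W = 0"
    using ftc2' has_integral_unique by blast
  have "Im (complex_of_real A2 + complex_of_real Iq - lam * complex_of_real Iw) = 0" using eq1 by simp
  then have "Im lam * Iw = 0" by simp
  then have Iw0: "Iw = 0" using nonreal by simp
  have "Re (complex_of_real A2 + complex_of_real Iq - lam * complex_of_real Iw) = 0" using eq1 by simp
  then have A2q: "A2 = - Iq" using Iw0 by simp
  have "Im (Z + complex_of_real Iaw + complex_of_real Iqw - lam * complex_of_real W) = 0" using eq2 by simp
  then have ImZ: "Im Z = Im lam * W" by simp
  have "Re (Z + complex_of_real Iaw + complex_of_real Iqw - lam * complex_of_real W) = 0" using eq2 by simp
  then have ReZ: "Re lam * W = Re Z + Iaw + Iqw" by simp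
  have "continuous_on I (\<lambda>x. cmod (y x))" by (intro continuous_intros cy)
  from continuous_attains_sup[OF Ic this] obtain x0 where x0: "x0 \<in> I"
    and x0max: "\<And>x. x \<in> I \<Longrightarrow> cmod (y x) \<le> cmod (y x0)" by blast
  define Bm where "Bm = cmod (y x0)"
  have Bm_pos: "Bm > 0"
  proof -
    obtain x where "x \<in> I" "y x \<noteq> 0" using ynz by (auto simp: I_def)
    then have "0 < cmod (y x)" "cmod (y x) \<le> cmod (y x0)" using x0max[of x] by auto
    then show ?thesis unfolding Bm_def by linarith
  qed
  have yBm: "cmod (y x) \<le> Bm" if "x \<in> I" for x using x0max[OF that] by (simp add: Bm_def)
  have yyB: "yy x \<le> Bm^2" if "x \<in> I" for x
    unfolding yy_def by (rule power_mono[OF yBm[OF that]]) simp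
  have yy0: "yy x \<ge> 0" for x by (simp add: yy_def)
  have yy10: "yy1 x \<ge> 0" for x by (simp add: yy1_def)
  have qn0: "qn x \<ge> 0" for x by (simp add: qn_def)
  define Qv where "Qv = integral I qn"
  define Lv where "Lv = integral I (\<lambda>x. (wd x)^2)"
  define N2 where "N2 = integral I yy"
  define Iqn where "Iqn = integral I (\<lambda>x. yy x * qn x)"
  have Iqn_le: "Iqn \<le> Bm^2 * Qv"
  proof -
    have "Iqn \<le> integral I (\<lambda>x. Bm^2 * qn x)" unfolding Iqn_def
      by (rule integral_le[OF ion[OF iqn] integrable_on_mult_right[OF ion[OF qnI]]])
         (use yyB qn0 in \<open>auto intro: mult_right_mono\<close>)
    then show ?thesis by (simp add: Qv_def)
  qed
  have mIq_le: "- Iq \<le> Iqn"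
  proof -
    have "integral I (\<lambda>x. - (yy x * q x)) \<le> Iqn" unfolding Iqn_def
    proof (rule integral_le)
      show "(\<lambda>x. - (yy x * q x)) integrable_on I" using ion[OF iq] by (rule integrable_neg)
      show "(\<lambda>x. yy x * qn x) integrable_on I" using ion[OF iqn] .
      show "- (yy x * q x) \<le> yy x * qn x" if "x \<in> I" for x
      proof -
        have "yy x * (- q x) \<le> yy x * qn x" using yy0[of x] by (intro mult_left_mono) (auto simp: qn_def)
        then show ?thesis by simp
      qed
    qed
    then show ?thesis by (simp add: Iq_def)
  qed
  have A2_le: "A2 \<le> Bm^2 * Qv" using A2q mIq_le Iqn_le by linarith
  define g2 where "g2 = (\<lambda>t. 2 * (cmod (y1 t) * cmod (y t)))"
  define P12 where "P12 = integral I (\<lambda>t. cmod (y1 t) * cmod (y t))"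
  define Du where "Du = (\<lambda>t. y t * cnj (y1 t) + y1 t * cnj (y t))"
  have dU: "((\<lambda>t. y t * cnj (y t)) has_vector_derivative Du t) (at t within I)" if "t \<in> I" for t
    unfolding Du_def by (rule has_vector_derivative_mult[OF d_y[OF that] has_vector_derivative_cnj[OF d_y[OF that]]])
  have nDu: "norm (Du t) \<le> g2 t" for t
  proof -
    have "norm (Du t) \<le> norm (y t * cnj (y1 t)) + norm (y1 t * cnj (y t))"
      unfolding Du_def by (rule norm_triangle_ineq)
    then show ?thesis by (simp add: g2_def norm_mult)
  qed
  have cg2: "continuous_on I g2" unfolding g2_def by (intro continuous_intros cy cy1)
  have cDu: "continuous_on I Du" unfolding Du_def by (intro continuous_intros cy cy1)
  have uyy: "y t * cnj (y t) = complex_of_real (yy t)" for t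
    unfolding yy_def by (rule complex_norm_square[symmetric])
  have pt: "yy x \<le> P12" if xI: "x \<in> I" for x
  proof -
    have x1: "-1 \<le> x" "x \<le> 1" using xI by (auto simp: I_def)
    have sub1: "{-1..x} \<subseteq> I" "{x..1} \<subseteq> I" using x1 by (auto simp: I_def)
    have h1: "(Du has_integral (y x * cnj (y x) - y (-1) * cnj (y (-1)))) {-1..x}"
    proof (rule fundamental_theorem_of_calculus[OF x1(1)])
      fix t assume "t \<in> {-1..x}"
      then have "t \<in> I" using sub1 by auto
      then show "((\<lambda>t. y t * cnj (y t)) has_vector_derivative Du t) (at t within {-1..x})"
        using has_vector_derivative_within_subset[OF dU sub1(1)] by blast
    qed
    have h2: "(Du has_integral (y 1 * cnj (y 1) - y x * cnj (y x))) {x..1}"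
    proof (rule fundamental_theorem_of_calculus[OF x1(2)])
      fix t assume "t \<in> {x..1}"
      then have "t \<in> I" using sub1 by auto
      then show "((\<lambda>t. y t * cnj (y t)) has_vector_derivative Du t) (at t within {x..1})"
        using has_vector_derivative_within_subset[OF dU sub1(2)] by blast
    qed
    have ig1: "g2 integrable_on {-1..x}" "g2 integrable_on {x..1}"
      using cg2 sub1 by (auto intro!: integrable_continuous_interval intro: continuous_on_subset)
    have b1: "norm (y x * cnj (y x) - y (-1) * cnj (y (-1))) \<le> integral {-1..x} g2"
      using integral_norm_bound_integral[OF has_integral_integrable[OF h1] ig1(1), of] nDu h1
      by (metis integral_unique)
    have b2: "norm (y 1 * cnj (y 1) - y x * cnj (y x)) \<le> integral {x..1} g2"
      using integral_norm_bound_integral[OF has_integral_integrable[OF h2] ig1(2), of] nDu h2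
      by (metis integral_unique)
    have "norm (y x * cnj (y x) - y (-1) * cnj (y (-1))) = yy x" using ym by (simp add: uyy yy0)
    moreover have "norm (y 1 * cnj (y 1) - y x * cnj (y x)) = yy x" using yp by (simp add: uyy yy0)
    moreover have "integral {-1..x} g2 + integral {x..1} g2 = integral I g2"
      unfolding I_def by (rule Henstock_Kurzweil_Integration.integral_combine[OF x1])
        (use cg2 in \<open>auto simp: I_def intro!: integrable_continuous_interval\<close>)
    moreover have "integral I g2 = 2 * P12" by (simp add: g2_def P12_def)
    ultimately show ?thesis using b1 b2 by linarith
  qed
  have cyn: "continuous_on I (\<lambda>t. cmod (y t))" "continuous_on I (\<lambda>t. cmod (y1 t))"
    by (intro continuous_intros cy cy1)+
  have P12_le: "P12 \<le> sqrt A2 * sqrt N2"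
  proof -
    have "P12 \<le> sqrt (integral I (\<lambda>t. (cmod (y1 t))^2)) * sqrt (integral I (\<lambda>t. (cmod (y t))^2))"
      unfolding P12_def
      by (rule cs_integral) (use ion[OF iyy1] ion[OF iyy] ion[OF acont[OF cyy']] in \<open>auto simp: yy_def yy1_def\<close>)
    then show ?thesis by (simp add: A2_def N2_def yy_def yy1_def)
  qed
  have Bm2_le: "Bm^2 \<le> sqrt A2 * sqrt N2"
    using pt[OF x0] P12_le by (simp add: yy_def Bm_def)
  have N2_le: "N2 \<le> 2 * Bm^2"
  proof -
    have "N2 \<le> integral I (\<lambda>x. Bm^2)" unfolding N2_def
      by (rule integral_le[OF ion[OF iyy]]) (use yyB in \<open>auto simp: I_def\<close>)
    also have "\<dots> = 2 * Bm^2" by (simp add: I_def)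
    finally show ?thesis .
  qed
  have A20: "A2 \<ge> 0" unfolding A2_def by (rule integral_nonneg[OF ion[OF iyy1]]) (simp add: yy10)
  have N20: "N2 \<ge> 0" unfolding N2_def by (rule integral_nonneg[OF ion[OF iyy]]) (simp add: yy0)
  have Qv0: "Qv \<ge> 0" unfolding Qv_def by (rule integral_nonneg[OF ion[OF qnI]]) (simp add: qn0)
  have Lv0: "Lv \<ge> 0" unfolding Lv_def by (rule integral_nonneg[OF wd2I]) simp
  define C where "C = Sup ((\<lambda>x. \<bar>w x\<bar>) ` {-1..1})"
  have cwa: "continuous_on I (\<lambda>x. \<bar>w x\<bar>)" by (intro continuous_intros cw)
  have wC: "\<bar>w x\<bar> \<le> C" if "x \<in> I" for x
    unfolding C_def using that bounded_imp_bdd_above[OF bnd[OF cwa]]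
    by (intro cSup_upper) (auto simp: I_def)
  have C0: "C \<ge> 0" using wC[of 0] by (simp add: I_def)
  have RQ: "\<bar>Iqw + Iaw\<bar> \<le> 2 * C * Iqn"
  proof -
    have "Iqw + Iaw = integral I (\<lambda>x. (yy x * w x) * q x + yy1 x * w x)"
      unfolding Iqw_def Iaw_def by (rule integral_add[symmetric, OF ion[OF iqw] ion[OF iyy1w]])
    moreover have "norm (integral I (\<lambda>x. (yy x * w x) * q x + yy1 x * w x))
        \<le> integral I (\<lambda>x. C * (yy x * q x + 2 * (yy x * qn x) + yy1 x))"
    proof (rule integral_norm_bound_integral)
      show "(\<lambda>x. (yy x * w x) * q x + yy1 x * w x) integrable_on I"
        by (intro integrable_add ion iqw iyy1w)
      show "(\<lambda>x. C * (yy x * q x + 2 * (yy x * qn x) + yy1 x)) integrable_on I"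
        by (intro integrable_on_mult_right integrable_add ion iq iqn iyy1)
      show "norm ((yy x * w x) * q x + yy1 x * w x) \<le> C * (yy x * q x + 2 * (yy x * qn x) + yy1 x)"
        if xI: "x \<in> I" for x
      proof -
        have aq: "\<bar>q x\<bar> = q x + 2 * qn x" by (simp add: qn_def)
        have "norm ((yy x * w x) * q x + yy1 x * w x) \<le> \<bar>(yy x * w x) * q x\<bar> + \<bar>yy1 x * w x\<bar>"
          by (simp add: abs_triangle_ineq)
        also have "\<dots> = \<bar>w x\<bar> * (yy x * \<bar>q x\<bar> + yy1 x)"
          using yy0[of x] yy10[of x] by (simp add: abs_mult algebra_simps)
        also have "\<dots> \<le> C * (yy x * \<bar>q x\<bar> + yy1 x)"
          using wC[OF xI] yy0[of x] yy10[of x] by (intro mult_right_mono) auto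
        also have "\<dots> = C * (yy x * q x + 2 * (yy x * qn x) + yy1 x)"
          by (simp add: aq algebra_simps)
        finally show ?thesis .
      qed
    qed
    moreover have "integral I (\<lambda>x. C * (yy x * q x + 2 * (yy x * qn x) + yy1 x)) = C * (Iq + 2 * Iqn + A2)"
      unfolding Iq_def Iqn_def A2_def
      by (simp add: integral_add integrable_add ion iq iqn iyy1 integrable_on_mult_right)
    ultimately show ?thesis using A2q by (simp add: algebra_simps)
  qed
  have Zb: "norm Z \<le> Bm * (sqrt A2 * sqrt Lv)"
  proof -
    have "norm Z \<le> integral I gz"
      unfolding Z_def by (rule integral_norm_bound_integral) (use ZfI gzI ion absolutely_integrable_on_def Zf_norm in auto)
    also have "\<dots> \<le> integral I (\<lambda>x. Bm * (cmod (y1 x) * \<bar>wd x\<bar>))"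
    proof (rule integral_le)
      show "gz integrable_on I" using gzI ion by blast
      have "(\<lambda>x. cmod (y1 x) * norm (wd x)) absolutely_integrable_on I"
        using bprod[OF cyn(2) absolutely_integrable_norm[OF wdI]] by (simp add: o_def)
      then show "(\<lambda>x. Bm * (cmod (y1 x) * \<bar>wd x\<bar>)) integrable_on I"
        by (intro integrable_on_mult_right) (use ion in auto)
      show "gz x \<le> Bm * (cmod (y1 x) * \<bar>wd x\<bar>)" if "x \<in> I" for x
      proof -
        have "(cmod (y1 x) * \<bar>wd x\<bar>) * cmod (y x) \<le> (cmod (y1 x) * \<bar>wd x\<bar>) * Bm"
          using yBm[OF that] by (intro mult_left_mono) auto
        then show ?thesis by (simp add: gz_def algebra_simps)
      qed
    qed
    also have "\<dots> = Bm * integral I (\<lambda>x. cmod (y1 x) * \<bar>wd x\<bar>)" by simp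
    also have "\<dots> \<le> Bm * (sqrt A2 * sqrt Lv)"
    proof (rule mult_left_mono)
      show "0 \<le> Bm" using Bm_pos by simp
      have "(\<lambda>x. cmod (y1 x) * norm (wd x)) absolutely_integrable_on I"
        using bprod[OF cyn(2) absolutely_integrable_norm[OF wdI]] by (simp add: o_def)
      then have i3: "(\<lambda>x. cmod (y1 x) * \<bar>wd x\<bar>) integrable_on I" using ion by simp
      have "integral I (\<lambda>x. cmod (y1 x) * \<bar>wd x\<bar>)
          \<le> sqrt (integral I (\<lambda>x. (cmod (y1 x))^2)) * sqrt (integral I (\<lambda>x. \<bar>wd x\<bar>^2))"
        by (rule cs_integral) (use ion[OF iyy1] wd2I i3 in \<open>auto simp: yy1_def\<close>)
      then show "integral I (\<lambda>x. cmod (y1 x) * \<bar>wd x\<bar>) \<le> sqrt A2 * sqrt Lv"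
        by (simp add: A2_def Lv_def yy1_def)
    qed
    finally show ?thesis .
  qed
  define S2 where "S2 = {x \<in> {-1..1}. (w x)^2 < \<epsilon>2}"
  define m2 where "m2 = measure lebesgue S2"
  have S2I: "S2 \<subseteq> I" by (auto simp: S2_def I_def)
  have S2l: "S2 \<in> lmeasurable"
  proof (rule bounded_set_imp_lmeasurable)
    show "bounded S2" using S2I by (rule bounded_subset[rotated]) (simp add: I_def)
    have mw2: "(\<lambda>x. (w x)^2) \<in> borel_measurable (lebesgue_on I)"
      by (rule mble) (intro continuous_intros cw)
    have "(\<lambda>x. (w x)^2) -` {..<\<epsilon>2} \<inter> space (lebesgue_on I) \<in> sets (lebesgue_on I)"
      by (rule measurable_sets[OF mw2]) (simp add: borel_open)
    moreover have "(\<lambda>x. (w x)^2) -` {..<\<epsilon>2} \<inter> space (lebesgue_on I) = S2"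
      by (auto simp: S2_def I_def space_restrict_space)
    ultimately have "S2 \<in> sets (lebesgue_on I)" by simp
    then show "S2 \<in> sets lebesgue" using Il by (simp add: sets_restrict_space_iff)
  qed
  have m20: "m2 \<ge> 0" by (simp add: m2_def)
  have indI: "indicat_real S2 integrable_on I" using S2l S2I
    by (simp add: integrable_on_indicator Int_absorb2)
  have indint: "integral I (indicat_real S2) = m2"
    using integral_indicator[of S2 I] S2l S2I by (simp add: Int_absorb2 m2_def)
  have W_ge: "\<epsilon>2 * N2 - \<epsilon>2 * Bm^2 * m2 \<le> W"
  proof -
    have "integral I (\<lambda>x. \<epsilon>2 * yy x - (\<epsilon>2 * Bm^2) * indicat_real S2 x) \<le> W" unfolding W_def
    proof (rule integral_le)
      show "(\<lambda>x. \<epsilon>2 * yy x - (\<epsilon>2 * Bm^2) * indicat_real S2 x) integrable_on I"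
        by (intro integrable_diff integrable_on_mult_right indI ion iyy)
      show "(\<lambda>x. (yy x * w x) * w x) integrable_on I" using ion[OF iw2] .
      show "\<epsilon>2 * yy x - (\<epsilon>2 * Bm^2) * indicat_real S2 x \<le> (yy x * w x) * w x" if xI: "x \<in> I" for x
      proof (cases "x \<in> S2")
        case True
        have "\<epsilon>2 * yy x \<le> \<epsilon>2 * Bm^2" using yyB[OF xI] eps_pos by simp
        moreover have "0 \<le> (yy x * w x) * w x" using yy0[of x] by (simp add: mult.assoc)
        ultimately show ?thesis using True by simp
      next
        case False
        then have "\<epsilon>2 \<le> (w x)^2" using xI by (auto simp: S2_def I_def)
        then have "\<epsilon>2 * yy x \<le> (w x)^2 * yy x" using yy0[of x] by (rule mult_right_mono)
        then show ?thesis using False by (simp add: power2_eq_square algebra_simps)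
      qed
    qed
    moreover have "integral I (\<lambda>x. \<epsilon>2 * yy x - (\<epsilon>2 * Bm^2) * indicat_real S2 x) = \<epsilon>2 * N2 - \<epsilon>2 * Bm^2 * m2"
      by (simp add: integral_diff integrable_on_mult_right indI ion iyy indint N2_def)
    ultimately show ?thesis by simp
  qed
  have LQ: "(LINT x:{-1..1}|lebesgue. max 0 (- q x)) = Qv"
    using set_lebesgue_integral_eq_integral(2)[of "{-1..1}" qn] qnI by (simp add: Qv_def qn_def I_def)
  have LL: "(LINT x:{-1..1}|lebesgue. (wd x)^2) = Lv"
    using set_lebesgue_integral_eq_integral(2)[OF wd_L2] by (simp add: Lv_def I_def)
  have m2_eq: "measure lebesgue {x \<in> {-1..1}. (w x)^2 < \<epsilon>2} = m2" by (simp add: m2_def S2_def)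
  have small: "8 * Qv^2 * m2 < 1" using eps_small LQ m2_eq by simp
  define sA where "sA = sqrt A2"
  define sN where "sN = sqrt N2"
  define sL where "sL = sqrt Lv"
  have sA0: "sA \<ge> 0" and sN0: "sN \<ge> 0" and sL0: "sL \<ge> 0" using A20 N20 Lv0 by (simp_all add: sA_def sN_def sL_def)
  have sA2: "sA^2 = A2" using A20 by (simp add: sA_def)
  have sN2: "sN^2 = N2" using N20 by (simp add: sN_def)
  have B1: "Bm^2 \<le> sA * sN" using Bm2_le by (simp add: sA_def sN_def)
  have Bm2p: "Bm^2 > 0" using Bm_pos by simp
  have st1: "Bm^2 \<le> 2 * A2"
  proof -
    have "(Bm^2)^2 \<le> (sA * sN)^2" using B1 Bm2p by (intro power_mono) auto
    also have "\<dots> = A2 * N2" by (simp add: power_mult_distrib sA2 sN2)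
    also have "\<dots> \<le> A2 * (2 * Bm^2)" using N2_le A20 by (rule mult_left_mono)
    finally have X: "Bm^2 * Bm^2 \<le> (2 * A2) * Bm^2" by (simp add: power2_eq_square algebra_simps)
    show ?thesis using mult_right_le_imp_le[OF X Bm2p] .
  qed
  have Qh: "1 \<le> 2 * Qv"
  proof -
    have "Bm^2 * 1 \<le> Bm^2 * (2 * Qv)" using st1 A2_le by simp
    then show ?thesis using Bm2p by simp
  qed
  have sAp: "sA > 0" using st1 Bm2p sA2 sA0 by (cases "sA = 0") auto
  have st3: "sA \<le> sN * Qv"
  proof -
    have "sA * sA \<le> sA * (sN * Qv)"
    proof -
      have "sA * sA = A2" using sA2 by (simp add: power2_eq_square)
      also have "\<dots> \<le> Bm^2 * Qv" by (rule A2_le)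
      also have "\<dots> \<le> (sA * sN) * Qv" using B1 Qv0 by (rule mult_right_mono)
      finally show ?thesis by (simp add: algebra_simps)
    qed
    then show ?thesis using sAp by simp
  qed
  have st4: "Bm^2 \<le> N2 * Qv"
  proof -
    have "Bm^2 \<le> sA * sN" by (rule B1)
    also have "\<dots> \<le> (sN * Qv) * sN" using st3 sN0 by (rule mult_right_mono)
    also have "\<dots> = N2 * Qv" using sN2 by (simp add: power2_eq_square algebra_simps)
    finally show ?thesis .
  qed
  have st5: "Bm * sA \<le> 2 * N2 * Qv^2"
  proof (rule power2_le_imp_le)
    have "(Bm * sA)^2 = Bm^2 * A2" by (simp add: power_mult_distrib sA2)
    also have "\<dots> \<le> (N2 * Qv) * (N2 * Qv^2)"
    proof (rule mult_mono)
      show "Bm^2 \<le> N2 * Qv" by (rule st4)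
      have "A2 = sA^2" by (simp add: sA2)
      also have "\<dots> \<le> (sN * Qv)^2" using st3 sA0 by (intro power_mono) auto
      also have "\<dots> = N2 * Qv^2" by (simp add: power_mult_distrib sN2)
      finally show "A2 \<le> N2 * Qv^2" .
    qed (use N20 Qv0 A20 in auto)
    also have "\<dots> = (N2^2 * Qv^3) * 1" by (simp add: power2_eq_square power3_eq_cube)
    also have "\<dots> \<le> (N2^2 * Qv^3) * (4 * Qv)" using Qh N20 Qv0 by (intro mult_left_mono) auto
    also have "\<dots> = (2 * N2 * Qv^2)^2" by (simp add: power2_eq_square power3_eq_cube)
    finally show "(Bm * sA)^2 \<le> (2 * N2 * Qv^2)^2" .
    show "0 \<le> 2 * N2 * Qv^2" using N20 by simp
  qed
  have st6: "4 * (Qv * m2) \<le> 1"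
  proof -
    have "4 * (Qv * m2) \<le> (8 * Qv) * (Qv * m2)" using Qh Qv0 m20 by (intro mult_right_mono) auto
    also have "\<dots> = 8 * Qv^2 * m2" by (simp add: power2_eq_square)
    finally have "4 * (Qv * m2) \<le> 8 * Qv^2 * m2" .
    then show ?thesis using small by linarith
  qed
  have st7: "3/4 * \<epsilon>2 * N2 \<le> W"
  proof -
    have "\<epsilon>2 * (Bm^2 * m2) \<le> \<epsilon>2 * ((N2 * Qv) * m2)"
      using st4 m20 eps_pos by (intro mult_left_mono mult_right_mono) auto
    then have "\<epsilon>2 * Bm^2 * m2 \<le> \<epsilon>2 * ((N2 * Qv) * m2)" by (simp add: mult.assoc)
    also have "\<dots> = \<epsilon>2 * N2 * (Qv * m2)" by (simp add: algebra_simps)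
    also have "\<dots> \<le> \<epsilon>2 * N2 * (1/4)" using st6 eps_pos N20 by (intro mult_left_mono) auto
    finally show ?thesis using W_ge by simp
  qed
  have N2p: "N2 > 0"
  proof -
    have "sN > 0" using B1 Bm2p sN0 by (cases "sN = 0") auto
    then show ?thesis using sN2 by (metis zero_less_power)
  qed
  have Kp: "3/4 * \<epsilon>2 * N2 > 0" using eps_pos N2p by simp
  have W0: "W \<ge> 0" using st7 Kp by linarith
  have nZ: "norm Z \<le> 2 * N2 * Qv^2 * sL"
  proof -
    have "norm Z \<le> Bm * (sA * sL)" using Zb by (simp add: sA_def sL_def)
    also have "\<dots> = (Bm * sA) * sL" by simp
    also have "\<dots> \<le> (2 * N2 * Qv^2) * sL" using st5 sL0 by (rule mult_right_mono)
    finally show ?thesis .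
  qed
  have imb: "\<bar>Im lam\<bar> \<le> 8 / \<epsilon>2 * sL * Qv^2"
  proof -
    have "\<bar>Im lam\<bar> * (3/4 * \<epsilon>2 * N2) \<le> \<bar>Im lam\<bar> * W" using st7 by (rule mult_left_mono) simp
    also have "\<dots> = \<bar>Im Z\<bar>" using ImZ W0 by (simp add: abs_mult)
    also have "\<dots> \<le> norm Z" by (rule abs_Im_le_cmod)
    also have "\<dots> \<le> 2 * N2 * Qv^2 * sL" by (rule nZ)
    also have "\<dots> \<le> (8 / \<epsilon>2 * sL * Qv^2) * (3/4 * \<epsilon>2 * N2)"
      using eps_pos N2p sL0 by (simp add: field_simps)
    finally have X: "\<bar>Im lam\<bar> * (3/4 * \<epsilon>2 * N2) \<le> (8 / \<epsilon>2 * sL * Qv^2) * (3/4 * \<epsilon>2 * N2)" .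
    show ?thesis using mult_right_le_imp_le[OF X Kp] .
  qed
  have reb: "\<bar>Re lam\<bar> \<le> 8 / \<epsilon>2 * Qv^2 * (3 * C + sL)"
  proof -
    have "\<bar>Re lam\<bar> * (3/4 * \<epsilon>2 * N2) \<le> \<bar>Re lam\<bar> * W" using st7 by (rule mult_left_mono) simp
    also have "\<dots> = \<bar>Re lam * W\<bar>" using W0 by (simp add: abs_mult)
    also have "\<dots> = \<bar>Re Z + (Iqw + Iaw)\<bar>" using ReZ by (simp add: algebra_simps)
    also have "\<dots> \<le> \<bar>Re Z\<bar> + \<bar>Iqw + Iaw\<bar>" by (rule abs_triangle_ineq)
    also have "\<dots> \<le> norm Z + 2 * C * Iqn" using RQ abs_Re_le_cmod[of Z] by linarith
    also have "\<dots> \<le> 2 * N2 * Qv^2 * sL + 2 * C * (N2 * Qv^2)"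
    proof (rule add_mono[OF nZ])
      have "Iqn \<le> Bm^2 * Qv" by (rule Iqn_le)
      also have "\<dots> \<le> (N2 * Qv) * Qv" using st4 Qv0 by (rule mult_right_mono)
      finally have "Iqn \<le> N2 * Qv^2" by (simp add: power2_eq_square)
      then show "2 * C * Iqn \<le> 2 * C * (N2 * Qv^2)" using C0 by (intro mult_left_mono) auto
    qed
    also have "\<dots> \<le> (8 / \<epsilon>2 * Qv^2 * (3 * C + sL)) * (3/4 * \<epsilon>2 * N2)"
      using eps_pos N2p sL0 C0 Qv0 by (simp add: field_simps)
    finally have X: "\<bar>Re lam\<bar> * (3/4 * \<epsilon>2 * N2) \<le> (8 / \<epsilon>2 * Qv^2 * (3 * C + sL)) * (3/4 * \<epsilon>2 * N2)" .
    show ?thesis using mult_right_le_imp_le[OF X Kp] .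
  qed
  show ?thesis
    unfolding LQ LL C_def[symmetric] using imb reb by (simp add: sL_def mult.commute mult.left_commute)
qed


end
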